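(* Let $n$ be even and let $T_n$ be a nearly regular tournament on $n$ vertices, i.e. every vertex has out-degree and in-degree in $\{\frac{n}{2}-1,\frac{n}{2}\}$. Then $SV(T_n)=\{v\in V(T_n): d^{+}(v)=\delta^{+}(T_n)\}$, where $\delta^{+}(T_n)$ is the minimum out-degree of $T_n$.
   Context: A tournament is an orientation of a complete graph. $N^{+}(v)$ is the set of out-neighbours of $v$ and $d^{+}(v)=|N^{+}(v)|$; $N^{+2}(v)$ is the set of vertices $w\notin N^{+}(v)\cup\{v\}$ such that $u\to w$ is an arc for some $u\in N^{+}(v)$. A Seymour vertex is a vertex $v$ with $|N^{+2}(v)|\ge|N^{+}(v)|$; $SV(D)$ denotes the set of Seymour vertices of $D$. *)

theory Defs
  imports Main
begin

definition tournament :: "'a set \<Rightarrow> ('a \<Rightarrow> 'a \<Rightarrow> bool) \<Rightarrow> bool" where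
  "tournament V A \<longleftrightarrow> finite V \<and>
     (\<forall>u v. A u v \<longrightarrow> u \<in> V \<and> v \<in> V) \<and>
     (\<forall>v\<in>V. \<not> A v v) \<and>
     (\<forall>u\<in>V. \<forall>v\<in>V. u \<noteq> v \<longrightarrow> (A u v \<longleftrightarrow> \<not> A v u))"

definition out_nbhd :: "'a set \<Rightarrow> ('a \<Rightarrow> 'a \<Rightarrow> bool) \<Rightarrow> 'a \<Rightarrow> 'a set" where
  "out_nbhd V A v = {w \<in> V. A v w}"

definition in_nbhd :: "'a set \<Rightarrow> ('a \<Rightarrow> 'a \<Rightarrow> bool) \<Rightarrow> 'a \<Rightarrow> 'a set" where
  "in_nbhd V A v = {w \<in> V. A w v}"

definition outdeg :: "'a set \<Rightarrow> ('a \<Rightarrow> 'a \<Rightarrow> bool) \<Rightarrow> 'a \<Rightarrow> nat" where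
  "outdeg V A v = card (out_nbhd V A v)"

definition indeg :: "'a set \<Rightarrow> ('a \<Rightarrow> 'a \<Rightarrow> bool) \<Rightarrow> 'a \<Rightarrow> nat" where
  "indeg V A v = card (in_nbhd V A v)"

definition second_out_nbhd :: "'a set \<Rightarrow> ('a \<Rightarrow> 'a \<Rightarrow> bool) \<Rightarrow> 'a \<Rightarrow> 'a set" where
  "second_out_nbhd V A v =
     {w \<in> V. w \<notin> out_nbhd V A v \<and> w \<noteq> v \<and> (\<exists>u\<in>out_nbhd V A v. A u w)}"

definition seymour_vertex :: "'a set \<Rightarrow> ('a \<Rightarrow> 'a \<Rightarrow> bool) \<Rightarrow> 'a \<Rightarrow> bool" where
  "seymour_vertex V A v \<longleftrightarrow> v \<in> V \<and>
     card (second_out_nbhd V A v) \<ge> card (out_nbhd V A v)"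

definition SV :: "'a set \<Rightarrow> ('a \<Rightarrow> 'a \<Rightarrow> bool) \<Rightarrow> 'a set" where
  "SV V A = {v \<in> V. seymour_vertex V A v}"

definition min_outdeg :: "'a set \<Rightarrow> ('a \<Rightarrow> 'a \<Rightarrow> bool) \<Rightarrow> nat" where
  "min_outdeg V A = Min (outdeg V A ` V)"

definition nearly_regular :: "'a set \<Rightarrow> ('a \<Rightarrow> 'a \<Rightarrow> bool) \<Rightarrow> bool" where
  "nearly_regular V A \<longleftrightarrow>
     (\<forall>v\<in>V. outdeg V A v \<in> {card V div 2 - 1, card V div 2} \<and>
             indeg V A v \<in> {card V div 2 - 1, card V div 2})"

end

theory Submission
  imports Defs
begin

lemma card_filter_sum: "finite V \<Longrightarrow> card {w\<in>V. P w} = (\<Sum>w\<in>V. if P w then 1 else 0::nat)"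
  by (simp add: sum.If_cases Int_def conj_commute)

lemma sum_out_in:
  assumes "finite V"
  shows "(\<Sum>v\<in>V. outdeg V A v) = (\<Sum>v\<in>V. indeg V A v)"
proof -
  have "(\<Sum>v\<in>V. outdeg V A v) = (\<Sum>v\<in>V. \<Sum>w\<in>V. if A v w then 1 else 0::nat)"
    using assms by (simp add: outdeg_def out_nbhd_def card_filter_sum)
  also have "\<dots> = (\<Sum>w\<in>V. \<Sum>v\<in>V. if A v w then 1 else 0::nat)"
    by (rule sum.swap)
  also have "\<dots> = (\<Sum>v\<in>V. indeg V A v)"
    using assms by (simp add: indeg_def in_nbhd_def card_filter_sum)
  finally show ?thesis .
qed

lemma out_plus_in:
  assumes T: "tournament V A" and v: "v \<in> V"
  shows "outdeg V A v + indeg V A v = card V - 1"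
proof -
  have fin: "finite V" using T unfolding tournament_def by blast
  have un: "out_nbhd V A v \<union> in_nbhd V A v = V - {v}"
    using T v unfolding tournament_def out_nbhd_def in_nbhd_def by blast
  have dj: "out_nbhd V A v \<inter> in_nbhd V A v = {}"
    using T v unfolding tournament_def out_nbhd_def in_nbhd_def by fastforce
  have "card (out_nbhd V A v \<union> in_nbhd V A v) = outdeg V A v + indeg V A v"
    unfolding outdeg_def indeg_def
    by (rule card_Un_disjoint) (use fin dj in \<open>auto simp: out_nbhd_def in_nbhd_def\<close>)
  with un v fin show ?thesis by simp
qed

theorem mainTheorem4:
  fixes V :: "'a set" and A :: "'a \<Rightarrow> 'a \<Rightarrow> bool" and n :: nat
  assumes "tournament V A"
    and "card V = n"
    and "even n"
    and "nearly_regular V A"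
  shows "SV V A = {v \<in> V. outdeg V A v = min_outdeg V A}"
proof (cases "V = {}")
  case True then show ?thesis by (simp add: SV_def)
next
  case False
  note T = assms(1)
  have fin: "finite V" using T unfolding tournament_def by blast
  have T1: "\<And>u w. A u w \<Longrightarrow> u \<in> V \<and> w \<in> V" using T unfolding tournament_def by blast
  have T2: "\<And>u. \<not> A u u" using T T1 unfolding tournament_def by blast
  have T3: "\<And>u w. u \<in> V \<Longrightarrow> w \<in> V \<Longrightarrow> u \<noteq> w \<Longrightarrow> A u w \<longleftrightarrow> \<not> A w u" using T unfolding tournament_def by blast
  define k where "k = n div 2"
  have nk: "n = 2 * k" using assms(3) k_def by auto
  have kpos: "k \<ge> 1" using False fin assms(2) nk by (cases k) auto
  have deg: "\<And>v. v \<in> V \<Longrightarrow> (outdeg V A v = k - 1 \<and> indeg V A v = k) \<or> (outdeg V A v = k \<and> indeg V A v = k - 1)"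
  proof -
    fix v assume v: "v \<in> V"
    have "outdeg V A v \<in> {k - 1, k}" "indeg V A v \<in> {k - 1, k}"
      using assms(4) v assms(2) k_def by (auto simp: nearly_regular_def)
    moreover have "outdeg V A v + indeg V A v = 2 * k - 1"
      using out_plus_in[OF T v] assms(2) nk by simp
    ultimately show "?thesis v" using kpos by auto
  qed
  have outle: "\<And>v. v \<in> V \<Longrightarrow> outdeg V A v \<le> k" using deg by fastforce
  have ex: "\<exists>v\<in>V. outdeg V A v = k - 1"
  proof (rule ccontr)
    assume "\<not> ?thesis"
    then have all: "\<And>v. v \<in> V \<Longrightarrow> outdeg V A v = k \<and> indeg V A v = k - 1"
      using deg by blast
    have s1: "(\<Sum>v\<in>V. outdeg V A v) = card V * k" using all by simp
    have s2: "(\<Sum>v\<in>V. indeg V A v) = card V * (k - 1)" using all by simp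
    have "card V * k = card V * (k - 1)" using sum_out_in[OF fin, of A] s1 s2 by argo
    moreover have "card V > 0" using False fin by (simp add: card_gt_0_iff)
    ultimately show False using kpos by simp
  qed
  have minv: "min_outdeg V A = k - 1"
  proof -
    have "Min (outdeg V A ` V) = k - 1"
    proof (rule Min_eqI)
      show "finite (outdeg V A ` V)" using fin by simp
      show "\<And>y. y \<in> outdeg V A ` V \<Longrightarrow> k - 1 \<le> y" using deg by fastforce
      show "k - 1 \<in> outdeg V A ` V" using ex by force
    qed
    then show ?thesis by (simp add: min_outdeg_def)
  qed
  have sub_in: "\<And>v. v \<in> V \<Longrightarrow> second_out_nbhd V A v \<subseteq> in_nbhd V A v"
    unfolding second_out_nbhd_def in_nbhd_def out_nbhd_def using T3 by blast
  show ?thesis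
  proof (rule set_eqI, rule iffI)
    fix v assume "v \<in> SV V A"
    then have v: "v \<in> V" and c: "card (second_out_nbhd V A v) \<ge> outdeg V A v"
      by (auto simp: SV_def seymour_vertex_def outdeg_def)
    have "card (second_out_nbhd V A v) \<le> indeg V A v"
      unfolding indeg_def by (rule card_mono) (use fin sub_in[OF v] in \<open>auto simp: in_nbhd_def\<close>)
    with c deg[OF v] kpos have "outdeg V A v = k - 1" by auto
    with v minv show "v \<in> {v \<in> V. outdeg V A v = min_outdeg V A}" by simp
  next
    fix v assume "v \<in> {v \<in> V. outdeg V A v = min_outdeg V A}"
    then have v: "v \<in> V" and o: "outdeg V A v = k - 1" using minv by auto
    have i: "indeg V A v = k" using deg[OF v] o kpos by auto
    define Ov where "Ov = out_nbhd V A v"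
    define I where "I = in_nbhd V A v"
    define S where "S = second_out_nbhd V A v"
    have finO: "finite Ov" using fin by (simp add: Ov_def out_nbhd_def)
    have finI: "finite I" using fin by (simp add: I_def in_nbhd_def)
    have dom: "\<And>w. w \<in> I - S \<Longrightarrow> insert v Ov \<subseteq> out_nbhd V A w \<and> v \<notin> Ov"
    proof -
      fix w assume w: "w \<in> I - S"
      have wV: "w \<in> V" and Awv: "A w v" using w by (auto simp: I_def in_nbhd_def)
      have "w \<noteq> v" using T2 Awv by metis
      have "w \<notin> Ov" using T3[OF v wV] Awv \<open>w \<noteq> v\<close> by (auto simp: Ov_def out_nbhd_def)
      then have nr: "\<forall>u\<in>Ov. \<not> A u w" using w wV \<open>w \<noteq> v\<close> by (auto simp: S_def second_out_nbhd_def Ov_def)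
      have "\<forall>u\<in>Ov. A w u"
      proof
        fix u assume u: "u \<in> Ov"
        have "u \<in> V" using u by (simp add: Ov_def out_nbhd_def)
        moreover have "u \<noteq> w" using u \<open>w \<notin> Ov\<close> by auto
        ultimately show "A w u" using T3[OF wV] nr u by blast
      qed
      moreover have "v \<notin> Ov" using T2 by (auto simp: Ov_def out_nbhd_def)
      ultimately show "insert v Ov \<subseteq> out_nbhd V A w \<and> v \<notin> Ov"
        using Awv v by (auto simp: out_nbhd_def Ov_def)
    qed
    have le1: "card (I - S) \<le> Suc 0"
    proof (rule card_le_Suc0_iff_eq[THEN iffD2])
      show "finite (I - S)" using finI by simp
    next
      show "\<forall>w1\<in>I - S. \<forall>w2\<in>I - S. w1 = w2"
      proof (intro ballI, rule ccontr)
        fix w1 w2 assume w1: "w1 \<in> I - S" and w2: "w2 \<in> I - S" and ne: "w1 \<noteq> w2"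
        have V12: "w1 \<in> V" "w2 \<in> V" using w1 w2 by (auto simp: I_def in_nbhd_def)
        have gen: "\<And>a b. a \<in> I - S \<Longrightarrow> b \<in> I - S \<Longrightarrow> a \<noteq> b \<Longrightarrow> A a b \<Longrightarrow> False"
        proof -
          fix a b assume a: "a \<in> I - S" and b: "b \<in> I - S" and "a \<noteq> b" and ab: "A a b"
          have aV: "a \<in> V" and bV: "b \<in> V" and Abv: "A b v" using a b by (auto simp: I_def in_nbhd_def)
          have "b \<notin> insert v Ov"
            using T2 T3[OF v bV] Abv by (auto simp: Ov_def out_nbhd_def)
          have "insert b (insert v Ov) \<subseteq> out_nbhd V A a"
            using dom[OF a] ab bV by (auto simp: out_nbhd_def)
          then have "card (insert b (insert v Ov)) \<le> outdeg V A a"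
            unfolding outdeg_def by (rule card_mono[rotated]) (use fin in \<open>simp add: out_nbhd_def\<close>)
          moreover have "card (insert b (insert v Ov)) = k + 1"
            using \<open>b \<notin> insert v Ov\<close> dom[OF a] finO o kpos by (simp add: Ov_def outdeg_def)
          ultimately show False using outle[OF aV] by simp
        qed
        show False
        proof (cases "A w1 w2")
          case True then show False using gen w1 w2 ne by blast
        next
          case False
          then have "A w2 w1" using T3[OF V12] ne by blast
          then show False using gen w1 w2 ne by blast
        qed
      qed
    qed
    have "card I \<le> card S + card (I - S)"
    proof -
      have "I \<subseteq> S \<union> (I - S)" by blast
      then have "card I \<le> card (S \<union> (I - S))"
        by (rule card_mono[rotated]) (use finI fin in \<open>auto simp: S_def second_out_nbhd_def\<close>)
      also have "\<dots> \<le> card S + card (I - S)" by (rule card_Un_le)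
      finally show ?thesis .
    qed
    then have "card S \<ge> card Ov" using le1 i o by (simp add: I_def Ov_def indeg_def outdeg_def)
    then show "v \<in> SV V A" using v by (simp add: SV_def seymour_vertex_def S_def Ov_def)
  qed
qed

end
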